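(* Euler's constant $\gamma:=\lim_{n\to\infty}\left(1+\frac12+\cdots+\frac1n-\ln n\right)$ satisfies \[ \gamma=\int_0^\infty\sum_{k=2}^\infty\frac{1}{k^2\binom{t+k}{k}}\,dt . \]
   Context: The generalized binomial coefficient is $\binom{s}{t}:=\frac{\Gamma(s+1)}{\Gamma(t+1)\Gamma(s-t+1)}$. *)

theory Defs
  imports "HOL-Analysis.Analysis"
begin

definition gbinom :: "real \<Rightarrow> real \<Rightarrow> real" where
  "gbinom s t = Gamma (s + 1) / (Gamma (t + 1) * Gamma (s - t + 1))"

end

theory Submission
  imports Defs
begin



definition A :: "real \<Rightarrow> nat \<Rightarrow> real" where
  "A x m = fact (Suc m) / ((real (Suc m))\<^sup>2 * pochhammer x (Suc m))"

lemma poch_pos: "x > 0 \<Longrightarrow> pochhammer (x::real) k > 0"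
  by (induction k) (auto simp: pochhammer_Suc)

lemma poch_ge: "x \<ge> 1 \<Longrightarrow> pochhammer (x::real) (Suc k) \<ge> x * fact (Suc k)"
proof (induction k)
  case 0 then show ?case by simp
next
  case (Suc k)
  have "x * fact (Suc (Suc k)) = (x * fact (Suc k)) * (real k + 2)"
    by (simp add: algebra_simps)
  also have "\<dots> \<le> pochhammer x (Suc k) * (x + real (Suc k))"
    using Suc poch_pos[of x "Suc k"] by (intro mult_mono) auto
  also have "\<dots> = pochhammer x (Suc (Suc k))" by (simp add: pochhammer_Suc)
  finally show ?case .
qed

lemma A_nonneg: "x > 0 \<Longrightarrow> A x m \<ge> 0"
  unfolding A_def using poch_pos[of x "Suc m"] by simp

lemma A_le: "x \<ge> 1 \<Longrightarrow> A x m \<le> 1 / (x * (real (Suc m))\<^sup>2)"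
proof -
  assume x: "x \<ge> 1"
  have p: "pochhammer x (Suc m) \<ge> x * fact (Suc m)" using poch_ge[OF x] .
  have fp: "(0::real) < fact (Suc m)" by simp
  have "A x m = fact (Suc m) / ((real (Suc m))\<^sup>2 * pochhammer x (Suc m))" by (simp add: A_def)
  also have "\<dots> \<le> fact (Suc m) / ((real (Suc m))\<^sup>2 * (x * fact (Suc m)))"
    using p x fp poch_pos[of x "Suc m"] by (intro divide_left_mono mult_left_mono mult_pos_pos) auto
  also have "\<dots> = 1 / (x * (real (Suc m))\<^sup>2)"
  proof -
    have g: "f/(c*(x*f)) = 1/(x*c)" if "f > 0" "x>0" "c>0" for f x c :: real
      using that by simp
    show ?thesis using g[OF fp, of x "(real (Suc m))\<^sup>2"] x by simp
  qed
  finally show ?thesis .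
qed

lemma summable_inv_sq: "summable (\<lambda>m. 1 / (real (Suc m))\<^sup>2)"
proof -
  have "summable (\<lambda>m. inverse ((real m)^2))" using inverse_power_summable[of 2] by simp
  then have "summable (\<lambda>m. inverse ((real (Suc m))^2))" by (subst summable_Suc_iff)
  then show ?thesis by (simp add: inverse_eq_divide)
qed

lemma A_summable: "x \<ge> 1 \<Longrightarrow> summable (A x)"
proof -
  assume x: "x \<ge> 1"
  have "summable (\<lambda>m. (1/x) * (1 / (real (Suc m))\<^sup>2))"
    by (intro summable_mult summable_inv_sq)
  then show ?thesis
    by (rule summable_comparison_test'[where N=0]) (use x A_nonneg A_le in auto)
qed

lemma A_diff: "x \<ge> 1 \<Longrightarrow> A x m - A (x+1) m = fact m / pochhammer x (m+2)"
proof -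
  assume x: "x \<ge> 1"
  define p where "p = pochhammer x (Suc m)"
  have pp: "p > 0" unfolding p_def using poch_pos[of x] x by simp
  have p1: "pochhammer (x+1) (Suc m) = p * (x + real (Suc m)) / x"
    using pochhammer_rec[of x "Suc m"] pochhammer_Suc[of x "Suc m"] x unfolding p_def
    by (simp add: field_simps)
  have p2: "pochhammer x (m+2) = p * (x + real (Suc m))" unfolding p_def
    by (simp add: pochhammer_Suc)
  have alg: "c*f/(c^2*p) - c*f/(c^2*(p*(x+c)/x)) = f/(p*(x+c))"
    if a: "c > 0" "p > 0" "x > 0" for c f p x :: real
  proof -
  have "c*f/(c^2*p) = f*(x+c)/(c*p*(x+c))" using a by (simp add: power2_eq_square)
  moreover have "c*f/(c^2*(p*(x+c)/x)) = f*x/(c*p*(x+c))" using a by (simp add: power2_eq_square)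
  ultimately have "c*f/(c^2*p) - c*f/(c^2*(p*(x+c)/x)) = (f*(x+c) - f*x)/(c*p*(x+c))"
    by (simp add: diff_divide_distrib)
  also have "f*(x+c) - f*x = c*f" by (simp add: algebra_simps)
  also have "c*f/(c*p*(x+c)) = f/(p*(x+c))" using a by (simp add: mult.assoc)
  finally show ?thesis .
  qed
  have fs: "fact (Suc m) = real (Suc m) * fact m" by simp
  show ?thesis using alg[of "real (Suc m)" p x "fact m"] pp x
    unfolding A_def p1 p2 p_def[symmetric] fs by simp
qed

lemma tele_sums: "(x::real) \<ge> 1 \<Longrightarrow> (\<lambda>m. fact m / pochhammer x (m+2)) sums (1/x^2)"
proof -
  assume x: "x \<ge> 1"
  define d where "d m = fact m / (x^2 * pochhammer (x+1) m)" for m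
  have qpos: "pochhammer (x+1) m > 0" for m using poch_pos[of "x+1" m] x by simp
  have eq: "d m - d (Suc m) = fact m / pochhammer x (m+2)" for m
  proof -
    define q where "q = pochhammer (x+1) m"
    have q: "q > 0" unfolding q_def using qpos .
    have e1: "pochhammer (x+1) (Suc m) = q * (x + 1 + real m)" unfolding q_def
      by (simp add: pochhammer_Suc)
    have e2: "pochhammer x (m+2) = x * (q * (x + 1 + real m))"
      using pochhammer_rec[of x "Suc m"] e1 by simp
    have alg: "f/(x^2*q) - c*f/(x^2*(q*(x+c))) = f/(x*(q*(x+c)))"
      if a: "c > 0" "q > 0" "x > 0" for c f q x :: real
    proof -
      have "f/(x^2*q) = f*(x+c)/(x^2*q*(x+c))" using a by simp
      moreover have "c*f/(x^2*(q*(x+c))) = f*c/(x^2*q*(x+c))" by (simp add: mult.assoc mult.commute)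
      ultimately have "f/(x^2*q) - c*f/(x^2*(q*(x+c))) = (f*(x+c) - f*c)/(x^2*q*(x+c))"
        by (simp add: diff_divide_distrib)
      also have "f*(x+c) - f*c = x*f" by (simp add: algebra_simps)
      also have "x*f/(x^2*q*(x+c)) = f/(x*(q*(x+c)))" using a by (simp add: power2_eq_square mult.assoc)
      finally show ?thesis .
    qed
    have fs: "fact (Suc m) = real (Suc m) * fact m" by simp
    show ?thesis unfolding d_def e1 e2 fs q_def[symmetric]
      using alg[of "real (Suc m)" q x "fact m"] q x by (simp add: add_ac)
  qed
  have lim: "d \<longlonglongrightarrow> 0"
  proof (rule tendsto_sandwich[where f="\<lambda>_. 0" and h="\<lambda>m. inverse (real (Suc m))"])
    show "\<forall>\<^sub>F m in sequentially. 0 \<le> d m"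
      unfolding d_def using qpos x by (intro always_eventually allI divide_nonneg_pos mult_pos_pos) auto
    show "\<forall>\<^sub>F m in sequentially. d m \<le> inverse (real (Suc m))"
    proof (intro always_eventually allI)
      fix m
      have "x * pochhammer (x+1) m = pochhammer x (Suc m)" by (simp add: pochhammer_rec)
      also have "\<dots> \<ge> x * fact (Suc m)" using poch_ge[OF x] .
      finally have p: "pochhammer (x+1) m \<ge> fact (Suc m)" using x by simp
      have "d m \<le> fact m / (1 * fact (Suc m))"
        unfolding d_def using p x qpos[of m]
        by (intro divide_left_mono mult_mono) (auto simp: one_le_power)
      also have "\<dots> = inverse (real (Suc m))"
      proof -
        have g: "f/(1*(c*f)) = inverse c" if "f > 0" "c > 0" for f c :: real using that by (simp add: inverse_eq_divide)
        have "fact (Suc m) = real (Suc m) * fact m" by simp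
        then show ?thesis using g[of "fact m" "real (Suc m)"] by simp
      qed
      finally show "d m \<le> inverse (real (Suc m))" .
    qed
  qed (use LIMSEQ_inverse_real_of_nat in auto)
  have "(\<lambda>m. d m - d (Suc m)) sums (d 0 - 0)" by (rule telescope_sums'[OF lim])
  then show ?thesis using eq x by (simp add: d_def)
qed


definition F :: "real \<Rightarrow> real" where "F x = suminf (A x)"

lemma F_step: "x \<ge> 1 \<Longrightarrow> F x - F (x+1) = 1/x^2"
proof -
  assume x: "x \<ge> 1"
  have "(\<lambda>m. A x m - A (x+1) m) sums (F x - F (x+1))"
    unfolding F_def using A_summable[OF x] A_summable[of "x+1"] x
    by (intro sums_diff summable_sums) auto
  moreover have "(\<lambda>m. A x m - A (x+1) m) sums (1/x^2)"
    using tele_sums[OF x] A_diff[OF x] by simp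
  ultimately show ?thesis by (rule sums_unique2)
qed

lemma F_shift: "x \<ge> 1 \<Longrightarrow> F x = (\<Sum>n<N. 1/(x + real n)^2) + F (x + real N)"
proof (induction N)
  case 0 then show ?case by simp
next
  case (Suc N)
  have "F (x + real N) = 1/(x + real N)^2 + F (x + real N + 1)"
    using F_step[of "x + real N"] Suc.prems by simp
  have e: "x + real (Suc N) = x + real N + 1" by simp
  have "(\<Sum>n<Suc N. 1/(x + real n)^2) = (\<Sum>n<N. 1/(x + real n)^2) + 1/(x + real N)^2" by simp
  then show ?case using Suc.IH[OF Suc.prems] \<open>F (x + real N) = _\<close> unfolding e by linarith
qed

lemma F_bounds: "y \<ge> 1 \<Longrightarrow> 0 \<le> F y \<and> F y \<le> (1/y) * (\<Sum>m. 1 / (real (Suc m))\<^sup>2)"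
proof -
  assume y: "y \<ge> 1"
  have "0 \<le> F y" unfolding F_def using A_nonneg y by (intro suminf_nonneg A_summable[OF y]) auto
  moreover have "F y \<le> (\<Sum>m. (1/y) * (1 / (real (Suc m))\<^sup>2))"
    unfolding F_def using A_le[OF y] A_summable[OF y] summable_mult[OF summable_inv_sq, of "1/y"]
    by (intro suminf_le) auto
  moreover have "(\<Sum>m. (1/y) * (1 / (real (Suc m))\<^sup>2)) = (1/y) * (\<Sum>m. 1 / (real (Suc m))\<^sup>2)"
    by (rule suminf_mult[OF summable_inv_sq])
  ultimately show ?thesis by simp
qed

lemma F_eq: "x \<ge> 1 \<Longrightarrow> F x = Polygamma 1 x"
proof -
  assume x: "x \<ge> 1"
  define S where "S = (\<Sum>m. 1 / (real (Suc m))\<^sup>2)"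
  have Fb: "0 \<le> F (x+real N) \<and> F (x + real N) \<le> (1/(x+real N))*S" for N
    unfolding S_def by (rule F_bounds) (use x in simp)
  have lim0: "(\<lambda>N. F (x + real N)) \<longlonglongrightarrow> 0"
  proof (rule tendsto_sandwich[where f="\<lambda>_. 0" and h="\<lambda>N. (1/(x + real N)) * S"])
    show "\<forall>\<^sub>F N in sequentially. 0 \<le> F (x + real N)"
      using Fb by (intro always_eventually allI) blast
    show "\<forall>\<^sub>F N in sequentially. F (x + real N) \<le> (1/(x + real N)) * S"
      using Fb by (intro always_eventually allI) blast
    have ft: "filterlim (\<lambda>N. x + real N) at_top sequentially"
      by (rule filterlim_tendsto_add_at_top[OF tendsto_const filterlim_real_sequentially])
    have lz: "(\<lambda>N. 1/(x + real N)) \<longlonglongrightarrow> 0"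
      by (rule tendsto_divide_0[OF tendsto_const filterlim_at_top_imp_at_infinity[OF ft]])
    show "(\<lambda>N. (1/(x + real N)) * S) \<longlonglongrightarrow> 0"
      using tendsto_mult[OF lz tendsto_const[of S]] by simp
  qed (rule tendsto_const)
  have "(\<lambda>N. F x - F (x + real N)) \<longlonglongrightarrow> F x - 0"
    by (intro tendsto_diff tendsto_const lim0)
  moreover have "(\<lambda>N. F x - F (x + real N)) = (\<lambda>N. \<Sum>n<N. 1/(x + real n)^2)"
  proof
    fix N show "F x - F (x + real N) = (\<Sum>n<N. 1/(x + real n)^2)"
      using F_shift[OF x, of N] by linarith
  qed
  ultimately have l1: "(\<lambda>N. \<Sum>n<N. 1/(x + real n)^2) \<longlonglongrightarrow> F x" by simp
  have "x \<noteq> 0" using x by simp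
  from Polygamma_LIMSEQ[OF this, of 1]
  have "(\<lambda>n. 1/(x + real n)^2) sums Polygamma 1 x" by (simp add: inverse_eq_divide power2_eq_square)
  then have "(\<lambda>N. \<Sum>n<N. 1/(x + real n)^2) \<longlonglongrightarrow> Polygamma 1 x" by (simp add: sums_def)
  from LIMSEQ_unique[OF l1 this] show ?thesis .
qed


lemma not_nonpos_pos: "(y::real) > 0 \<Longrightarrow> y \<notin> \<int>\<^sub>\<le>\<^sub>0"
  using nonpos_Ints_nonpos by fastforce

lemma term_eq:
  assumes t: "(t::real) \<ge> 0"
  shows "1 / ((real (k + 2))\<^sup>2 * gbinom (t + real (k + 2)) (real (k + 2))) = A (t+1) (Suc k)"
proof -
  have nz: "t + 1 \<notin> \<int>\<^sub>\<le>\<^sub>0" using t by (intro not_nonpos_pos) simp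
  have g1: "Gamma (t + real (k+2) + 1) = pochhammer (t+1) (k+2) * Gamma (t+1)"
    using pochhammer_Gamma[OF nz, of "k+2"] Gamma_eq_zero_iff[of "t+1"] nz
    by (simp add: field_simps add_ac)
  have g2: "Gamma (real (k+2) + 1) = fact (k+2)"
    using Gamma_fact[of "k+2", where 'a=real] by (simp add: add_ac)
  have g3: "t + real (k+2) - real (k+2) + 1 = t + 1" by simp
  have Gp: "Gamma (t+1) \<noteq> 0" using Gamma_eq_zero_iff[of "t+1"] nz by simp
  have pp: "pochhammer (t+1) (k+2) > 0" using poch_pos[of "t+1"] t by simp
  have "gbinom (t + real (k + 2)) (real (k + 2)) = pochhammer (t+1) (k+2) / fact (k+2)"
    unfolding gbinom_def g1 g2 g3 using Gp by simp
  then show ?thesis unfolding A_def using pp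
    by (simp add: numeral_2_eq_2)
qed

definition g :: "real \<Rightarrow> real" where
  "g t = (\<Sum>k. 1 / ((real (k + 2))\<^sup>2 * gbinom (t + real (k + 2)) (real (k + 2))))"

lemma g_eq: assumes t: "(t::real) \<ge> 0"
  shows "g t = Polygamma 1 (t+1) - 1/(t+1) \<and> g t \<ge> 0"
proof -
  have x: "t + 1 \<ge> 1" using t by simp
  have s: "summable (A (t+1))" by (rule A_summable[OF x])
  have ge: "g t = (\<Sum>k. A (t+1) (Suc k))" unfolding g_def using term_eq[OF t] by simp
  also have "\<dots> = F (t+1) - A (t+1) 0" unfolding F_def by (rule suminf_split_head[OF s])
  also have "A (t+1) 0 = 1/(t+1)" unfolding A_def by simp
  finally have e: "g t = Polygamma 1 (t+1) - 1/(t+1)" using F_eq[OF x] by simp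
  have "(\<Sum>k. A (t+1) (Suc k)) \<ge> 0"
    using s A_nonneg[of "t+1"] t by (intro suminf_nonneg) (auto simp: summable_Suc_iff)
  with ge e show ?thesis by simp
qed



lemma deriv_G:
  assumes t: "(t::real) \<ge> 0"
  shows "((\<lambda>t. Digamma (t+1) - ln (t+1)) has_real_derivative (Polygamma 1 (t+1) - 1/(t+1))) (at t within S)"
proof -
  have nz: "t + 1 \<notin> \<int>\<^sub>\<le>\<^sub>0" using t by (intro not_nonpos_pos) simp
  have d: "(Digamma has_real_derivative Polygamma 1 (t+1)) (at (t+1))"
    using has_field_derivative_Polygamma[OF nz, of 0 UNIV] by simp
  have "((\<lambda>t. Digamma (t+1)) has_real_derivative Polygamma 1 (t+1) * 1) (at t within S)"
    by (rule DERIV_chain2[where g="\<lambda>t. t+1" and x=t, OF d])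
       (auto intro!: derivative_eq_intros)
  moreover have "((\<lambda>t. ln (t+1)) has_real_derivative 1/(t+1)) (at t within S)"
    using t by (auto intro!: derivative_eq_intros)
  ultimately show ?thesis by (intro DERIV_diff) auto
qed

lemma int_N: "((\<lambda>t. Polygamma 1 (t+1) - 1/(t+1)) has_integral (harm N - ln (real N + 1))) {0..real N}"
proof -
  have "((\<lambda>t. Polygamma 1 (t+1) - 1/(t+1)) has_integral
        ((Digamma (real N+1) - ln (real N+1)) - (Digamma (0+1) - ln (0+1)))) {0..real N}"
  proof (rule fundamental_theorem_of_calculus)
    fix x assume "x \<in> {0..real N}"
    then show "((\<lambda>t. Digamma (t+1) - ln (t+1)) has_vector_derivative (Polygamma 1 (x+1) - 1/(x+1))) (at x within {0..real N})"
      unfolding has_real_derivative_iff_has_vector_derivative[symmetric] by (intro deriv_G) auto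
  qed simp
  moreover have "Digamma (real N + 1) = harm N - euler_mascheroni"
    using Digamma_of_nat[of N, where 'a=real] by (simp add: add_ac)
  ultimately show ?thesis by simp
qed

lemma lim_x: "(\<lambda>N. harm N - ln (real N + 1)) \<longlonglongrightarrow> euler_mascheroni"
proof -
  have a: "(\<lambda>N. harm (Suc N) - ln (real (Suc N))) \<longlonglongrightarrow> euler_mascheroni"
    using LIMSEQ_Suc[OF euler_mascheroni_LIMSEQ] by simp
  have b: "(\<lambda>N. inverse (real (Suc N))) \<longlonglongrightarrow> 0" by (rule LIMSEQ_inverse_real_of_nat)
  have "(\<lambda>N. (harm (Suc N) - ln (real (Suc N))) - inverse (real (Suc N))) \<longlonglongrightarrow> euler_mascheroni - 0"
    by (intro tendsto_diff a b)
  moreover have "(\<lambda>N. (harm (Suc N) - ln (real (Suc N))) - inverse (real (Suc N))) = (\<lambda>N. harm N - ln (real N + 1))"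
    by (rule ext) (simp add: harm_Suc add_ac)
  ultimately show ?thesis by simp
qed

theorem proposition2:
  shows "((\<lambda>t::real. \<Sum>k. 1 / ((real (k + 2))\<^sup>2 * gbinom (t + real (k + 2)) (real (k + 2))))
           has_integral euler_mascheroni) {0..}"
proof -
  define f where "f k t = (if t \<in> {0..real k} then g t else 0)" for k :: nat and t :: real
  have "(g has_integral euler_mascheroni) {0..}"
  proof (rule has_integral_monotone_convergence_increasing[where f=f and x="\<lambda>N. harm N - ln (real N + 1)"])
    fix k
    have "(g has_integral (harm k - ln (real k + 1))) {0..real k}"
      using int_N[of k] by (subst has_integral_cong[where g="\<lambda>t. Polygamma 1 (t+1) - 1/(t+1)"])
        (auto simp: g_eq)
    then show "(f k has_integral (harm k - ln (real k + 1))) {0..}"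
      unfolding f_def by (subst has_integral_restrict) auto
  next
    fix k and t :: real assume "t \<in> {0..}"
    then show "f k t \<le> f (Suc k) t" unfolding f_def using g_eq[of t] by auto
  next
    fix t :: real assume "t \<in> {0..}"
    have t: "t \<ge> 0" using \<open>t \<in> {0..}\<close> by simp
    have le: "t \<le> real k" if "nat \<lceil>t\<rceil> \<le> k" for k using that t by linarith
    have "eventually (\<lambda>k. f k t = g t) sequentially"
      using eventually_ge_at_top[of "nat \<lceil>t\<rceil>"]
      by eventually_elim (use le t in \<open>auto simp: f_def\<close>)
    then show "(\<lambda>k. f k t) \<longlonglongrightarrow> g t"
      by (rule tendsto_eventually)
  qed (rule lim_x)
  then show ?thesis unfolding g_def .
qed


end
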